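(* Let $\Gamma$ be a positive recursive absorbing game with payoffs in $(0,1]$. For each player $i\in I$ there exists a stationary profile $x_{-i}\in\prod_{j\ne i}\Delta(A_j)$ of the other players such that $\gamma_i(\sigma_i,x_{-i})\le v_i$ for every strategy $\sigma_i\in\Sigma_i$ of player $i$ (i.e., a stationary minmaxing profile against $i$ exists).
   Context: A positive recursive absorbing game is $\Gamma=(I,(A_i)_{i\in I},(r_i)_{i\in I},p)$ with $I$ a finite set of players, $A_i$ finite nonempty action sets, $A=\prod_i A_i$, $r_i:A\to(0,1]$, $p:A\to[0,1]$. At each stage, if not yet absorbed, players choose actions $a^n\in A$; with probability $p(a^n)$ the game absorbs with terminal payoff $r(a^n)$, otherwise continues (payoff $0$ in the nonabsorbing state). $\theta$ is the absorption stage. Behavior strategies $\sigma_i:\bigcup_{n\ge0}A^n\to\Delta(A_i)$ form $\Sigma_i$; $\Sigma_{-i}=\prod_{j\neq i}\Sigma_j$. The undiscounted payoff is $\gamma(\sigma)=\mathbf E_\sigma[r(a^\theta)\mathbf 1_{\theta<\infty}]$. A stationary strategy of player $j$ plays a fixed mixed action $x_j\in\Delta(A_j)$ at every stage regardless of history. Player $i$'s minmax value is $v_i:=\inf_{\sigma_{-i}\in\Sigma_{-i}}\sup_{\sigma_i\in\Sigma_i}\gamma_i(\sigma_i,\sigma_{-i})$. *)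

theory Defs
  imports "HOL-Probability.Probability_Mass_Function"
begin

definition profiles :: "('i \<Rightarrow> 'a set) \<Rightarrow> ('i \<Rightarrow> 'a) set" where
  "profiles A = PiE UNIV A"

definition histories :: "('i \<Rightarrow> 'a set) \<Rightarrow> nat \<Rightarrow> ('i \<Rightarrow> 'a) list set" where
  "histories A n = {h. length h = n \<and> set h \<subseteq> profiles A}"

definition is_strategy :: "('i \<Rightarrow> 'a set) \<Rightarrow> 'i \<Rightarrow> (('i \<Rightarrow> 'a) list \<Rightarrow> 'a pmf) \<Rightarrow> bool" where
  "is_strategy A j s \<longleftrightarrow> (\<forall>h. set_pmf (s h) \<subseteq> A j)"

definition is_profile :: "('i \<Rightarrow> 'a set) \<Rightarrow> ('i \<Rightarrow> ('i \<Rightarrow> 'a) list \<Rightarrow> 'a pmf) \<Rightarrow> bool" where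
  "is_profile A \<sigma> \<longleftrightarrow> (\<forall>j. is_strategy A j (\<sigma> j))"

definition act_prob :: "('i::finite \<Rightarrow> ('i \<Rightarrow> 'a) list \<Rightarrow> 'a pmf) \<Rightarrow> ('i \<Rightarrow> 'a) list \<Rightarrow> ('i \<Rightarrow> 'a) \<Rightarrow> real" where
  "act_prob \<sigma> h a = (\<Prod>j\<in>UNIV. pmf (\<sigma> j h) (a j))"

text \<open>Probability that history h is realized and the game has not absorbed during h.\<close>
definition reach :: "(('i \<Rightarrow> 'a) \<Rightarrow> real) \<Rightarrow> ('i::finite \<Rightarrow> ('i \<Rightarrow> 'a) list \<Rightarrow> 'a pmf) \<Rightarrow> ('i \<Rightarrow> 'a) list \<Rightarrow> real" where
  "reach p \<sigma> h = (\<Prod>k<length h. act_prob \<sigma> (take k h) (h ! k) * (1 - p (h ! k)))"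

text \<open>Undiscounted payoff E[r_i(a^\<theta>) 1_{\<theta><\<infinity>}]: sum over absorption stages n
  (the history before absorption has length n) of the probability of absorbing
  with profile a times r_i(a).\<close>
definition payoff :: "('i \<Rightarrow> 'a set) \<Rightarrow> ('i \<Rightarrow> ('i \<Rightarrow> 'a) \<Rightarrow> real) \<Rightarrow> (('i \<Rightarrow> 'a) \<Rightarrow> real)
    \<Rightarrow> ('i::finite \<Rightarrow> ('i \<Rightarrow> 'a) list \<Rightarrow> 'a pmf) \<Rightarrow> 'i \<Rightarrow> real" where
  "payoff A r p \<sigma> i = (\<Sum>n. \<Sum>h\<in>histories A n. reach p \<sigma> h *
      (\<Sum>a\<in>profiles A. act_prob \<sigma> h a * p a * r i a))"

text \<open>The others' strategies are represented by a full profile \<tau> whose i-th component is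
  overridden by player i's strategy s.\<close>
definition minmax :: "('i \<Rightarrow> 'a set) \<Rightarrow> ('i \<Rightarrow> ('i \<Rightarrow> 'a) \<Rightarrow> real) \<Rightarrow> (('i \<Rightarrow> 'a) \<Rightarrow> real)
    \<Rightarrow> 'i::finite \<Rightarrow> real" where
  "minmax A r p i = (INF \<tau>\<in>{\<tau>. is_profile A \<tau>}.
      SUP s\<in>{s. is_strategy A i s}. payoff A r p (\<tau>(i := s)) i)"

definition pos_rec_absorbing_game :: "('i::finite \<Rightarrow> 'a set) \<Rightarrow> ('i \<Rightarrow> ('i \<Rightarrow> 'a) \<Rightarrow> real)
    \<Rightarrow> (('i \<Rightarrow> 'a) \<Rightarrow> real) \<Rightarrow> bool" where
  "pos_rec_absorbing_game A r p \<longleftrightarrow>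
     (\<forall>j. finite (A j) \<and> A j \<noteq> {}) \<and>
     (\<forall>j. \<forall>a\<in>profiles A. 0 < r j a \<and> r j a \<le> 1) \<and>
     (\<forall>a\<in>profiles A. 0 \<le> p a \<and> p a \<le> 1)"

end

theory Submission
  imports Defs
begin


lemma finite_subseq:
  fixes f :: "nat \<Rightarrow> 'k \<Rightarrow> real"
  assumes "finite S" "\<And>n k. k \<in> S \<Longrightarrow> f n k \<in> {0..1}"
  shows "\<exists>rr l. strict_mono rr \<and> (\<forall>k\<in>S. (\<lambda>n. f (rr n) k) \<longlonglongrightarrow> l k)"
  using assms
proof (induction S rule: finite_induct)
  case empty
  show ?case by (rule exI[of _ id]) (auto simp: strict_mono_def)
next
  case (insert k S)
  then obtain rr l where rr: "strict_mono rr" and l: "\<forall>k\<in>S. (\<lambda>n. f (rr n) k) \<longlonglongrightarrow> l k"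
    by blast
  have sc: "seq_compact {0..1::real}" using compact_Icc seq_compact_eq_compact by blast
  have "\<forall>n. (\<lambda>n. f (rr n) k) n \<in> {0..1}" using insert.prems by auto
  then have "\<exists>l0\<in>{0..1}. \<exists>r'. strict_mono r' \<and> ((\<lambda>n. f (rr n) k) \<circ> r') \<longlonglongrightarrow> l0"
    using sc[unfolded seq_compact_def, rule_format, of "\<lambda>n. f (rr n) k"] insert.prems by auto
  then obtain l0 r' where r': "strict_mono r'" and l0: "((\<lambda>n. f (rr n) k) \<circ> r') \<longlonglongrightarrow> l0"
    by blast
  show ?case
  proof (intro exI conjI ballI)
    show "strict_mono (rr \<circ> r')" using rr r' by (rule strict_mono_o)
    fix k' assume k': "k' \<in> insert k S"
    show "(\<lambda>n. f ((rr \<circ> r') n) k') \<longlonglongrightarrow> (l(k := l0)) k'"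
    proof (cases "k' = k")
      case True
      then show ?thesis using l0 by (simp add: comp_def)
    next
      case False
      then have "k' \<in> S" using k' by auto
      then have "((\<lambda>n. f (rr n) k') \<circ> r') \<longlonglongrightarrow> l k'"
        using l r' by (intro LIMSEQ_subseq_LIMSEQ) auto
      then show ?thesis using False by (simp add: comp_def)
    qed
  qed
qed

locale game =
  fixes A :: "'i::finite \<Rightarrow> 'a set" and r :: "'i \<Rightarrow> ('i \<Rightarrow> 'a) \<Rightarrow> real"
    and p :: "('i \<Rightarrow> 'a) \<Rightarrow> real" and i :: 'i
  assumes G: "pos_rec_absorbing_game A r p"
begin

lemma finA: "finite (A j)" and neA: "A j \<noteq> {}"
  using G by (auto simp: pos_rec_absorbing_game_def)

lemma r_pos: "a \<in> profiles A \<Longrightarrow> 0 < r j a" and r_le1: "a \<in> profiles A \<Longrightarrow> r j a \<le> 1"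
  and p_nonneg: "a \<in> profiles A \<Longrightarrow> 0 \<le> p a" and p_le1: "a \<in> profiles A \<Longrightarrow> p a \<le> 1"
  using G by (auto simp: pos_rec_absorbing_game_def)

lemma fin_prof: "finite (profiles A)"
  by (simp add: profiles_def finite_PiE finA)

lemma prof_mem: "a \<in> profiles A \<Longrightarrow> a j \<in> A j"
  by (auto simp: profiles_def)

lemma fin_hist: "finite (histories A n)"
proof -
  have "histories A n = {xs. set xs \<subseteq> profiles A \<and> length xs = n}"
    by (auto simp: histories_def)
  then show ?thesis using finite_lists_length_eq[OF fin_prof] by simp
qed

definition W :: "('i \<Rightarrow> 'a \<Rightarrow> real) \<Rightarrow> ('i \<Rightarrow> 'a) \<Rightarrow> real" where
  "W y a = (\<Prod>j\<in>UNIV-{i}. y j (a j))"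
definition Pw :: "('i \<Rightarrow> 'a \<Rightarrow> real) \<Rightarrow> 'a \<Rightarrow> real" where
  "Pw y b = (\<Sum>a\<in>{a\<in>profiles A. a i = b}. W y a * p a)"
definition Rw :: "('i \<Rightarrow> 'a \<Rightarrow> real) \<Rightarrow> 'a \<Rightarrow> real" where
  "Rw y b = (\<Sum>a\<in>{a\<in>profiles A. a i = b}. W y a * (p a * r i a))"
definition valid :: "('i \<Rightarrow> 'a \<Rightarrow> real) \<Rightarrow> bool" where
  "valid y \<longleftrightarrow> (\<forall>j. (\<forall>b\<in>A j. 0 \<le> y j b) \<and> sum (y j) (A j) = 1)"
definition good :: "('i \<Rightarrow> 'a \<Rightarrow> real) \<Rightarrow> real \<Rightarrow> bool" where
  "good y d \<longleftrightarrow> (\<forall>b\<in>A i. Rw y b \<le> d * Pw y b)"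
definition Cset :: "real set" where
  "Cset = {d. 0 \<le> d \<and> (\<exists>y. valid y \<and> good y d)}"
definition cval :: real where "cval = Inf Cset"

lemma W_nonneg: "valid y \<Longrightarrow> a \<in> profiles A \<Longrightarrow> 0 \<le> W y a"
  unfolding W_def valid_def by (auto intro!: prod_nonneg prof_mem)

lemma Pw_nonneg: "valid y \<Longrightarrow> 0 \<le> Pw y b"
  unfolding Pw_def by (auto intro!: sum_nonneg mult_nonneg_nonneg W_nonneg p_nonneg)

lemma Rw_le_Pw: "valid y \<Longrightarrow> Rw y b \<le> Pw y b"
  unfolding Pw_def Rw_def
proof (rule sum_mono)
  fix a assume "valid y" "a \<in> {a \<in> profiles A. a i = b}"
  then have "0 \<le> W y a * p a" "r i a \<le> 1" "a \<in> profiles A"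
    by (auto intro!: mult_nonneg_nonneg W_nonneg p_nonneg r_le1)
  then show "W y a * (p a * r i a) \<le> W y a * p a"
    by (metis mult.assoc mult_left_le)
qed

lemma Rw_nonneg: "valid y \<Longrightarrow> 0 \<le> Rw y b"
  unfolding Rw_def by (auto intro!: sum_nonneg mult_nonneg_nonneg W_nonneg p_nonneg less_imp_le[OF r_pos])

lemma W_tendsto:
  assumes "\<forall>j. \<forall>b\<in>A j. (\<lambda>n. Y n j b) \<longlonglongrightarrow> y j b" "a \<in> profiles A"
  shows "(\<lambda>n. W (Y n) a) \<longlonglongrightarrow> W y a"
  unfolding W_def using assms by (auto intro!: tendsto_prod prof_mem)

lemma Pw_tendsto:
  assumes "\<forall>j. \<forall>b\<in>A j. (\<lambda>n. Y n j b) \<longlonglongrightarrow> y j b"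
  shows "(\<lambda>n. Pw (Y n) b) \<longlonglongrightarrow> Pw y b"
  unfolding Pw_def using assms by (auto intro!: tendsto_sum tendsto_mult W_tendsto)

lemma Rw_tendsto:
  assumes "\<forall>j. \<forall>b\<in>A j. (\<lambda>n. Y n j b) \<longlonglongrightarrow> y j b"
  shows "(\<lambda>n. Rw (Y n) b) \<longlonglongrightarrow> Rw y b"
  unfolding Rw_def using assms by (auto intro!: tendsto_sum tendsto_mult W_tendsto)

lemma valid_subseq:
  fixes Y :: "nat \<Rightarrow> 'i \<Rightarrow> 'a \<Rightarrow> real"
  assumes "\<And>n. valid (Y n)"
  shows "\<exists>rr y. strict_mono rr \<and> valid y \<and> (\<forall>j. \<forall>b\<in>A j. (\<lambda>n. Y (rr n) j b) \<longlonglongrightarrow> y j b)"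
proof -
  have fS: "finite (SIGMA j:UNIV. A j)" by (auto intro!: finite_SigmaI finA)
  have "(case k of (j,b) \<Rightarrow> Y n j b) \<in> {0..1}" if hk: "k \<in> (SIGMA j:UNIV. A j)" for n k
  proof -
    obtain j b where k: "k = (j,b)" "b \<in> A j" using hk by blast
    have "Y n j b \<le> sum (Y n j) (A j)"
      using assms[of n] k finA by (intro member_le_sum) (auto simp: valid_def)
    then show ?thesis using assms[of n] k by (auto simp: valid_def)
  qed
  from finite_subseq[OF fS, of "\<lambda>n k. case k of (j,b) \<Rightarrow> Y n j b", OF this] obtain rr l where rr: "strict_mono rr"
    and l: "\<forall>k\<in>(SIGMA j:UNIV. A j). (\<lambda>n. case k of (j,b) \<Rightarrow> Y (rr n) j b) \<longlonglongrightarrow> l k"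
    by blast
  define y where "y = (\<lambda>j b. l (j,b))"
  have conv: "\<forall>j. \<forall>b\<in>A j. (\<lambda>n. Y (rr n) j b) \<longlonglongrightarrow> y j b"
    using l by (auto simp: y_def)
  have "valid y" unfolding valid_def
  proof (intro allI conjI ballI)
    fix j b assume "b \<in> A j"
    then show "0 \<le> y j b"
      using conv assms by (intro LIMSEQ_le_const[of "\<lambda>n. Y (rr n) j b"]) (auto simp: valid_def)
  next
    fix j
    have "(\<lambda>n. sum (Y (rr n) j) (A j)) \<longlonglongrightarrow> sum (y j) (A j)"
      using conv by (auto intro!: tendsto_sum)
    moreover have "(\<lambda>n. sum (Y (rr n) j) (A j)) = (\<lambda>n. 1)"
      using assms by (auto simp: valid_def)
    ultimately show "sum (y j) (A j) = 1"
      using LIMSEQ_unique tendsto_const by metis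
  qed
  then show ?thesis using rr conv by blast
qed

end

context game begin

lemma valid_exists: "\<exists>y. valid y"
proof -
  define y where "y = (\<lambda>j (b::'a). 1 / real (card (A j)))"
  have "card (A j) > 0" for j using finA neA by (simp add: card_gt_0_iff)
  then have "valid y" unfolding valid_def y_def by auto
  then show ?thesis by blast
qed

lemma Cset_ne: "1 \<in> Cset"
proof -
  obtain y where "valid y" using valid_exists by blast
  moreover then have "good y 1" using Rw_le_Pw by (simp add: good_def)
  ultimately have "0 \<le> (1::real) \<and> (\<exists>y. valid y \<and> good y 1)" by auto
  then show ?thesis unfolding Cset_def by (rule CollectI)
qed

lemma Cset_bdd: "bdd_below Cset"
  by (rule bdd_belowI[of _ 0]) (auto simp: Cset_def)

lemma cval_nonneg: "0 \<le> cval"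
  unfolding cval_def
proof (rule cInf_greatest)
  show "Cset \<noteq> {}" using Cset_ne by blast
qed (auto simp: Cset_def)

lemma exists_min: "\<exists>y. valid y \<and> good y cval"
proof -
  have "\<exists>d y. cval \<le> d \<and> d < cval + inverse (real (Suc n)) \<and> valid y \<and> good y d" for n
  proof -
    have "Inf Cset < cval + inverse (real (Suc n))" unfolding cval_def by simp
    then obtain d where d: "d \<in> Cset" "d < cval + inverse (real (Suc n))"
      using cInf_lessD[of Cset] Cset_ne by blast
    then have "cval \<le> d" unfolding cval_def using Cset_bdd by (intro cInf_lower)
    then show ?thesis using d by (auto simp: Cset_def)
  qed
  then obtain D where "\<forall>n. \<exists>y. cval \<le> D n \<and> D n < cval + inverse (real (Suc n)) \<and> valid y \<and> good y (D n)"
    by metis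
  then obtain Y where DY: "\<And>n. cval \<le> D n \<and> D n < cval + inverse (real (Suc n)) \<and> valid (Y n) \<and> good (Y n) (D n)"
    by metis
  have Dlim: "D \<longlonglongrightarrow> cval"
  proof (rule tendsto_sandwich[of "\<lambda>n. cval" _ _ "\<lambda>n. cval + inverse (real (Suc n))"])
    show "\<forall>\<^sub>F n in sequentially. cval \<le> D n" by (rule always_eventually) (metis DY)
    show "\<forall>\<^sub>F n in sequentially. D n \<le> cval + inverse (real (Suc n))" by (rule always_eventually) (metis DY less_imp_le)
    show "(\<lambda>n. cval) \<longlonglongrightarrow> cval" by simp
    show "(\<lambda>n. cval + inverse (real (Suc n))) \<longlonglongrightarrow> cval"
      using tendsto_add[OF tendsto_const LIMSEQ_inverse_real_of_nat, of cval] by simp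
  qed
  obtain rr y where rr: "strict_mono rr" and vy: "valid y"
    and conv: "\<forall>j. \<forall>b\<in>A j. (\<lambda>n. Y (rr n) j b) \<longlonglongrightarrow> y j b"
    using valid_subseq[of Y] DY by blast
  have "good y cval" unfolding good_def
  proof
    fix b assume b: "b \<in> A i"
    have "(\<lambda>n. Rw (Y (rr n)) b) \<longlonglongrightarrow> Rw y b" using conv by (rule Rw_tendsto)
    moreover have "(\<lambda>n. D (rr n) * Pw (Y (rr n)) b) \<longlonglongrightarrow> cval * Pw y b"
      using LIMSEQ_subseq_LIMSEQ[OF Dlim rr] Pw_tendsto[OF conv]
      by (auto intro!: tendsto_mult simp: comp_def)
    moreover have "\<forall>n. Rw (Y (rr n)) b \<le> D (rr n) * Pw (Y (rr n)) b"
      using DY b by (auto simp: good_def)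
    ultimately show "Rw y b \<le> cval * Pw y b"
      by (intro LIMSEQ_le) auto
  qed
  then show ?thesis using vy by blast
qed

lemma exists_delta:
  assumes "0 < \<epsilon>" "\<epsilon> \<le> cval"
  shows "\<exists>\<delta>>0. \<forall>y. valid y \<longrightarrow> (\<exists>b\<in>A i. \<delta> \<le> Pw y b \<and> (cval - \<epsilon>) * Pw y b \<le> Rw y b)"
proof (rule ccontr)
  assume "\<not> ?thesis"
  then have "\<forall>n. \<exists>y. valid y \<and> (\<forall>b\<in>A i. Pw y b < inverse (real (Suc n)) \<or> Rw y b < (cval - \<epsilon>) * Pw y b)"
    by (metis not_le of_nat_0_less_iff positive_imp_inverse_positive zero_less_Suc)
  then obtain Y where Y: "\<And>n. valid (Y n)"
    "\<And>n b. b \<in> A i \<Longrightarrow> Pw (Y n) b < inverse (real (Suc n)) \<or> Rw (Y n) b < (cval - \<epsilon>) * Pw (Y n) b"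
    by metis
  obtain rr y where rr: "strict_mono rr" and vy: "valid y"
    and conv: "\<forall>j. \<forall>b\<in>A j. (\<lambda>n. Y (rr n) j b) \<longlonglongrightarrow> y j b"
    using valid_subseq[of Y] Y by blast
  have "good y (cval - \<epsilon>)" unfolding good_def
  proof
    fix b assume b: "b \<in> A i"
    show "Rw y b \<le> (cval - \<epsilon>) * Pw y b"
    proof (cases "Pw y b = 0")
      case True
      then show ?thesis using Rw_le_Pw[OF vy, of b] by simp
    next
      case False
      then have pos: "0 < Pw y b" using Pw_nonneg[OF vy, of b] by simp
      have PL: "(\<lambda>n. Pw (Y (rr n)) b) \<longlonglongrightarrow> Pw y b" using conv by (rule Pw_tendsto)
      have RL: "(\<lambda>n. Rw (Y (rr n)) b) \<longlonglongrightarrow> Rw y b" using conv by (rule Rw_tendsto)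
      have IL: "(\<lambda>n. inverse (real (Suc (rr n)))) \<longlonglongrightarrow> 0"
        using LIMSEQ_subseq_LIMSEQ[OF LIMSEQ_inverse_real_of_nat rr] by (simp add: comp_def)
      have e1: "\<forall>\<^sub>F n in sequentially. Pw y b / 2 < Pw (Y (rr n)) b"
        using order_tendstoD(1)[OF PL, of "Pw y b / 2"] pos by simp
      have e2: "\<forall>\<^sub>F n in sequentially. inverse (real (Suc (rr n))) < Pw y b / 2"
        using order_tendstoD(2)[OF IL, of "Pw y b / 2"] pos by simp
      have "\<forall>\<^sub>F n in sequentially. Rw (Y (rr n)) b \<le> (cval - \<epsilon>) * Pw (Y (rr n)) b"
        using e1 e2
      proof eventually_elim
        case (elim n)
        then show ?case using Y(2)[OF b, of "rr n"] by auto
      qed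
      then show ?thesis
        using tendsto_le[OF _ tendsto_mult[OF tendsto_const PL] RL] by auto
    qed
  qed
  then have "cval - \<epsilon> \<in> Cset" using vy assms by (auto simp: Cset_def)
  then have "cval \<le> cval - \<epsilon>" unfolding cval_def using Cset_bdd by (intro cInf_lower)
  then show False using assms by simp
qed

end

context game begin

lemma act_nonneg: "0 \<le> act_prob \<sigma> h a"
  by (simp add: act_prob_def prod_nonneg)

lemma prof_strat: "is_profile A \<sigma> \<Longrightarrow> set_pmf (\<sigma> j h) \<subseteq> A j"
  by (auto simp: is_profile_def is_strategy_def)

lemma act_sum: assumes "is_profile A \<sigma>" shows "(\<Sum>a\<in>profiles A. act_prob \<sigma> h a) = 1"
proof -
  have "(\<Prod>j\<in>UNIV. sum (pmf (\<sigma> j h)) (A j)) = (\<Sum>g\<in>PiE UNIV A. \<Prod>j\<in>UNIV. pmf (\<sigma> j h) (g j))"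
    by (rule prod_sum_PiE) (auto simp: finA)
  moreover have "(\<Prod>j\<in>UNIV. sum (pmf (\<sigma> j h)) (A j)) = 1"
    using sum_pmf_eq_1[OF finA prof_strat[OF assms]] by simp
  ultimately show ?thesis by (simp add: profiles_def act_prob_def)
qed

lemma reach_nonneg: "set h \<subseteq> profiles A \<Longrightarrow> 0 \<le> reach p \<sigma> h"
  unfolding reach_def
  by (intro prod_nonneg ballI mult_nonneg_nonneg act_nonneg)
     (auto simp: p_le1 intro!: p_le1 nth_mem)

lemma hist_reach_nonneg: "h \<in> histories A n \<Longrightarrow> 0 \<le> reach p \<sigma> h"
  by (rule reach_nonneg) (auto simp: histories_def)

lemma reach_snoc: "reach p \<sigma> (h @ [a]) = reach p \<sigma> h * (act_prob \<sigma> h a * (1 - p a))"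
proof -
  have "reach p \<sigma> (h @ [a]) = (\<Prod>k<Suc (length h). act_prob \<sigma> (take k (h @ [a])) ((h @ [a]) ! k) * (1 - p ((h @ [a]) ! k)))"
    by (simp add: reach_def)
  also have "\<dots> = (\<Prod>k<length h. act_prob \<sigma> (take k (h @ [a])) ((h @ [a]) ! k) * (1 - p ((h @ [a]) ! k)))
      * (act_prob \<sigma> h a * (1 - p a))"
    by (simp add: prod.lessThan_Suc)
  also have "(\<Prod>k<length h. act_prob \<sigma> (take k (h @ [a])) ((h @ [a]) ! k) * (1 - p ((h @ [a]) ! k)))
      = reach p \<sigma> h"
    unfolding reach_def by (intro prod.cong) (auto simp: nth_append)
  finally show ?thesis .
qed

lemma hist_0: "histories A 0 = {[]}"
  by (auto simp: histories_def)

lemma hist_Suc_img: "histories A (Suc n) = (\<lambda>(h,a). h @ [a]) ` (histories A n \<times> profiles A)"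
proof
  show "histories A (Suc n) \<subseteq> (\<lambda>(h,a). h @ [a]) ` (histories A n \<times> profiles A)"
  proof
    fix h' assume h': "h' \<in> histories A (Suc n)"
    then have ne: "h' \<noteq> []" by (auto simp: histories_def)
    then have eq: "h' = butlast h' @ [last h']" by simp
    have "set h' \<subseteq> profiles A" "length h' = Suc n" using h' by (auto simp: histories_def)
    then have "butlast h' \<in> histories A n" "last h' \<in> profiles A"
      using ne in_set_butlastD last_in_set by (fastforce simp: histories_def)+
    then show "h' \<in> (\<lambda>(h,a). h @ [a]) ` (histories A n \<times> profiles A)"
      using eq by (intro image_eqI[of _ _ "(butlast h', last h')"]) auto
  qed
qed (auto simp: histories_def)

lemma hist_Suc: "(\<Sum>h\<in>histories A (Suc n). f h) = (\<Sum>h\<in>histories A n. \<Sum>a\<in>profiles A. f (h @ [a]))"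
proof -
  have inj: "inj_on (\<lambda>(h,a). h @ [a]) (histories A n \<times> profiles A)"
    by (auto simp: inj_on_def)
  show ?thesis
    unfolding hist_Suc_img sum.reindex[OF inj] sum.cartesian_product
    by (intro sum.cong) auto
qed

definition absorb where "absorb \<sigma> h = (\<Sum>a\<in>profiles A. act_prob \<sigma> h a * p a)"
definition qs where "qs \<sigma> n = (\<Sum>h\<in>histories A n. reach p \<sigma> h)"
definition inner where "inner \<sigma> h = (\<Sum>a\<in>profiles A. act_prob \<sigma> h a * p a * r i a)"
definition T where "T \<sigma> n = (\<Sum>h\<in>histories A n. reach p \<sigma> h * inner \<sigma> h)"

lemma payoff_T: "payoff A r p \<sigma> i = suminf (T \<sigma>)"
  unfolding payoff_def by (rule arg_cong[where f=suminf]) (simp add: fun_eq_iff T_def inner_def)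

lemma absorb_nonneg: "0 \<le> absorb \<sigma> h"
  unfolding absorb_def by (auto intro!: sum_nonneg mult_nonneg_nonneg act_nonneg p_nonneg)

lemma inner_nonneg: "0 \<le> inner \<sigma> h"
  unfolding inner_def
  by (auto intro!: sum_nonneg mult_nonneg_nonneg act_nonneg p_nonneg less_imp_le[OF r_pos])

lemma inner_le: "inner \<sigma> h \<le> absorb \<sigma> h"
  unfolding inner_def absorb_def
proof (rule sum_mono)
  fix a assume "a \<in> profiles A"
  then have "0 \<le> act_prob \<sigma> h a * p a" "r i a \<le> 1"
    by (auto intro!: mult_nonneg_nonneg act_nonneg p_nonneg r_le1)
  then show "act_prob \<sigma> h a * p a * r i a \<le> act_prob \<sigma> h a * p a"
    by (simp add: mult_left_le)
qed

lemma qs_0: "qs \<sigma> 0 = 1"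
  by (simp add: qs_def hist_0 reach_def)

lemma qs_nonneg: "0 \<le> qs \<sigma> n"
  unfolding qs_def by (auto intro!: sum_nonneg hist_reach_nonneg)

lemma qs_Suc:
  assumes "is_profile A \<sigma>"
  shows "qs \<sigma> (Suc n) = (\<Sum>h\<in>histories A n. reach p \<sigma> h * (1 - absorb \<sigma> h))"
proof -
  have "qs \<sigma> (Suc n) = (\<Sum>h\<in>histories A n. \<Sum>a\<in>profiles A. reach p \<sigma> h * (act_prob \<sigma> h a * (1 - p a)))"
    unfolding qs_def hist_Suc reach_snoc by simp
  also have "\<dots> = (\<Sum>h\<in>histories A n. reach p \<sigma> h * (1 - absorb \<sigma> h))"
  proof (rule sum.cong[OF refl])
    fix h
    have "(\<Sum>a\<in>profiles A. act_prob \<sigma> h a * (1 - p a))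
        = (\<Sum>a\<in>profiles A. act_prob \<sigma> h a) - absorb \<sigma> h"
      unfolding absorb_def by (simp add: right_diff_distrib sum_subtractf)
    then show "(\<Sum>a\<in>profiles A. reach p \<sigma> h * (act_prob \<sigma> h a * (1 - p a))) = reach p \<sigma> h * (1 - absorb \<sigma> h)"
      using act_sum[OF assms] by (simp add: sum_distrib_left[symmetric])
  qed
  finally show ?thesis .
qed

lemma qs_diff:
  assumes "is_profile A \<sigma>"
  shows "qs \<sigma> n - qs \<sigma> (Suc n) = (\<Sum>h\<in>histories A n. reach p \<sigma> h * absorb \<sigma> h)"
  unfolding qs_Suc[OF assms] unfolding qs_def
  by (simp add: sum_subtractf[symmetric] right_diff_distrib)

lemma telescope: "(\<Sum>n<N. qs \<sigma> n - qs \<sigma> (Suc n)) = 1 - qs \<sigma> N"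
  using sum_lessThan_telescope'[of "qs \<sigma>" N] qs_0 by simp

lemma T_nonneg: "0 \<le> T \<sigma> n"
  unfolding T_def by (auto intro!: sum_nonneg mult_nonneg_nonneg hist_reach_nonneg inner_nonneg)

lemma T_le_coef:
  assumes "is_profile A \<sigma>" "\<And>h. inner \<sigma> h \<le> d * absorb \<sigma> h"
  shows "T \<sigma> n \<le> d * (qs \<sigma> n - qs \<sigma> (Suc n))"
proof -
  have "T \<sigma> n \<le> (\<Sum>h\<in>histories A n. reach p \<sigma> h * (d * absorb \<sigma> h))"
    unfolding T_def by (intro sum_mono mult_left_mono assms(2) hist_reach_nonneg)
  also have "\<dots> = d * (qs \<sigma> n - qs \<sigma> (Suc n))"
    unfolding qs_diff[OF assms(1)] by (simp add: sum_distrib_left mult_ac)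
  finally show ?thesis .
qed

lemma T_ge_coef:
  assumes "is_profile A \<sigma>" "\<And>h. d * absorb \<sigma> h \<le> inner \<sigma> h"
  shows "d * (qs \<sigma> n - qs \<sigma> (Suc n)) \<le> T \<sigma> n"
proof -
  have "d * (qs \<sigma> n - qs \<sigma> (Suc n)) = (\<Sum>h\<in>histories A n. reach p \<sigma> h * (d * absorb \<sigma> h))"
    unfolding qs_diff[OF assms(1)] by (simp add: sum_distrib_left mult_ac)
  also have "\<dots> \<le> T \<sigma> n"
    unfolding T_def by (intro sum_mono mult_left_mono assms(2) hist_reach_nonneg)
  finally show ?thesis .
qed

lemma T_partial_le:
  assumes "is_profile A \<sigma>" "\<And>h. inner \<sigma> h \<le> d * absorb \<sigma> h" "0 \<le> d"
  shows "(\<Sum>n<N. T \<sigma> n) \<le> d"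
proof -
  have "(\<Sum>n<N. T \<sigma> n) \<le> (\<Sum>n<N. d * (qs \<sigma> n - qs \<sigma> (Suc n)))"
    by (intro sum_mono T_le_coef assms)
  also have "\<dots> = d * (1 - qs \<sigma> N)" by (simp add: sum_distrib_left[symmetric] telescope)
  also have "\<dots> \<le> d" using qs_nonneg[of \<sigma> N] assms(3) by (simp add: mult_left_le)
  finally show ?thesis .
qed

lemma T_summable: "is_profile A \<sigma> \<Longrightarrow> summable (T \<sigma>)"
  using T_partial_le[of \<sigma> 1] inner_le by (intro summableI_nonneg_bounded[OF T_nonneg]) auto

lemma payoff_nonneg: "is_profile A \<sigma> \<Longrightarrow> 0 \<le> payoff A r p \<sigma> i"
  unfolding payoff_T using T_summable T_nonneg by (simp add: suminf_nonneg)

lemma payoff_le1: "is_profile A \<sigma> \<Longrightarrow> payoff A r p \<sigma> i \<le> 1"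
  unfolding payoff_T using T_summable T_partial_le[of \<sigma> 1] inner_le
  by (intro suminf_le_const) auto

lemma payoff_upper:
  assumes "is_profile A \<sigma>" "\<And>h. inner \<sigma> h \<le> d * absorb \<sigma> h" "0 \<le> d"
  shows "payoff A r p \<sigma> i \<le> d"
  unfolding payoff_T using T_summable[OF assms(1)] T_partial_le[OF assms]
  by (intro suminf_le_const) auto

lemma payoff_lower:
  assumes "is_profile A \<sigma>" "\<And>h. e * absorb \<sigma> h \<le> inner \<sigma> h" "0 \<le> e"
    and "0 < \<delta>" "\<delta> \<le> 1" "\<And>h. \<delta> \<le> absorb \<sigma> h"
  shows "e \<le> payoff A r p \<sigma> i"
proof -
  have qpow: "qs \<sigma> n \<le> (1 - \<delta>) ^ n" for n
  proof (induction n)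
    case 0 then show ?case by (simp add: qs_0)
  next
    case (Suc n)
    have "qs \<sigma> (Suc n) \<le> (\<Sum>h\<in>histories A n. reach p \<sigma> h * (1 - \<delta>))"
      unfolding qs_Suc[OF assms(1)]
      by (intro sum_mono mult_left_mono hist_reach_nonneg) (use assms(6) in auto)
    also have "\<dots> = (1 - \<delta>) * qs \<sigma> n" by (simp add: qs_def sum_distrib_left mult_ac)
    also have "\<dots> \<le> (1 - \<delta>) * (1 - \<delta>) ^ n"
      using Suc assms(5) by (intro mult_left_mono) auto
    finally show ?case by simp
  qed
  have part: "e * (1 - (1 - \<delta>) ^ N) \<le> payoff A r p \<sigma> i" for N
  proof -
    have "e * (1 - (1 - \<delta>) ^ N) \<le> e * (1 - qs \<sigma> N)"
      using qpow[of N] assms(3) by (intro mult_left_mono) auto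
    also have "\<dots> = (\<Sum>n<N. e * (qs \<sigma> n - qs \<sigma> (Suc n)))"
      by (simp add: sum_distrib_left[symmetric] telescope)
    also have "\<dots> \<le> (\<Sum>n<N. T \<sigma> n)"
      by (intro sum_mono T_ge_coef assms(1,2))
    also have "\<dots> \<le> payoff A r p \<sigma> i"
      unfolding payoff_T using T_summable[OF assms(1)] T_nonneg
      by (intro sum_le_suminf) auto
    finally show ?thesis .
  qed
  have pz: "(\<lambda>N. (1 - \<delta>) ^ N) \<longlonglongrightarrow> 0"
  proof (rule LIMSEQ_power_zero)
    show "norm (1 - \<delta>) < 1" using assms(4,5) by simp
  qed
  have "(\<lambda>N. e * (1 - (1 - \<delta>) ^ N)) \<longlonglongrightarrow> e * (1 - 0)"
    using tendsto_mult[OF tendsto_const tendsto_diff[OF tendsto_const pz], of e 1] by simp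
  then show ?thesis using part by (intro LIMSEQ_le_const2) auto
qed

end

context game begin

definition yv where "yv \<sigma> h = (\<lambda>j b. pmf (\<sigma> j h) b)"

lemma act_W: "act_prob \<sigma> h a = pmf (\<sigma> i h) (a i) * W (yv \<sigma> h) a"
  unfolding act_prob_def W_def yv_def using prod.remove[of UNIV i] by simp

lemma act_split:
  "(\<Sum>a\<in>profiles A. act_prob \<sigma> h a * g a)
   = (\<Sum>b\<in>A i. pmf (\<sigma> i h) b * (\<Sum>a\<in>{a\<in>profiles A. a i = b}. W (yv \<sigma> h) a * g a))"
proof -
  have "(\<Sum>b\<in>A i. pmf (\<sigma> i h) b * (\<Sum>a\<in>{a\<in>profiles A. a i = b}. W (yv \<sigma> h) a * g a))
      = (\<Sum>b\<in>A i. \<Sum>a\<in>{a\<in>profiles A. a i = b}. act_prob \<sigma> h a * g a)"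
    by (auto simp: sum_distrib_left act_W mult_ac intro!: sum.cong)
  also have "\<dots> = (\<Sum>a\<in>profiles A. act_prob \<sigma> h a * g a)"
    by (rule sum.group) (auto simp: fin_prof finA prof_mem)
  finally show ?thesis by simp
qed

lemma absorb_split: "absorb \<sigma> h = (\<Sum>b\<in>A i. pmf (\<sigma> i h) b * Pw (yv \<sigma> h) b)"
  unfolding absorb_def Pw_def by (rule act_split)

lemma inner_split: "inner \<sigma> h = (\<Sum>b\<in>A i. pmf (\<sigma> i h) b * Rw (yv \<sigma> h) b)"
  unfolding inner_def Rw_def mult.assoc by (rule act_split)

lemma W_cong:
  assumes "\<And>j b. j \<noteq> i \<Longrightarrow> b \<in> A j \<Longrightarrow> y j b = y' j b" "a \<in> profiles A"
  shows "W y a = W y' a"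
  unfolding W_def using assms by (intro prod.cong) (auto intro: prof_mem)

lemma Pw_cong:
  assumes "\<And>j b. j \<noteq> i \<Longrightarrow> b \<in> A j \<Longrightarrow> y j b = y' j b"
  shows "Pw y b = Pw y' b"
  unfolding Pw_def using W_cong[OF assms] by (intro sum.cong) auto

lemma Rw_cong:
  assumes "\<And>j b. j \<noteq> i \<Longrightarrow> b \<in> A j \<Longrightarrow> y j b = y' j b"
  shows "Rw y b = Rw y' b"
  unfolding Rw_def using W_cong[OF assms] by (intro sum.cong) auto

lemma sum_return: "c \<in> A i \<Longrightarrow> (\<Sum>b\<in>A i. pmf (return_pmf c) b * F b) = F c"
  by (simp add: pmf_return indicator_def finA if_distrib sum.delta cong: if_cong)

lemma profile_upd: "is_profile A \<tau> \<Longrightarrow> is_strategy A i s \<Longrightarrow> is_profile A (\<tau>(i := s))"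
  by (auto simp: is_profile_def)

lemma yv_valid: "is_profile A \<tau> \<Longrightarrow> valid (yv \<tau> h)"
  unfolding valid_def yv_def using sum_pmf_eq_1[OF finA prof_strat] by auto

lemma profile_exists: "\<exists>\<tau>. is_profile A \<tau>"
proof -
  have "(SOME b. b \<in> A j) \<in> A j" for j using neA by (simp add: some_in_eq)
  then have "is_profile A (\<lambda>j h. return_pmf (SOME b. b \<in> A j))"
    by (auto simp: is_profile_def is_strategy_def)
  then show ?thesis by blast
qed

lemma key_lower:
  assumes tau: "is_profile A \<tau>" and e: "0 < \<epsilon>" "\<epsilon> \<le> cval"
  shows "\<exists>s. is_strategy A i s \<and> cval - \<epsilon> \<le> payoff A r p (\<tau>(i := s)) i"
proof -
  obtain \<delta> where d: "\<delta> > 0" and dy: "\<And>y. valid y \<Longrightarrow> \<exists>b\<in>A i. \<delta> \<le> Pw y b \<and> (cval - \<epsilon>) * Pw y b \<le> Rw y b"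
    using exists_delta[OF e] by blast
  have "\<forall>h. \<exists>b. b \<in> A i \<and> \<delta> \<le> Pw (yv \<tau> h) b \<and> (cval - \<epsilon>) * Pw (yv \<tau> h) b \<le> Rw (yv \<tau> h) b"
    using dy[OF yv_valid[OF tau]] by blast
  then obtain bs where bs: "\<And>h. bs h \<in> A i" "\<And>h. \<delta> \<le> Pw (yv \<tau> h) (bs h)"
    "\<And>h. (cval - \<epsilon>) * Pw (yv \<tau> h) (bs h) \<le> Rw (yv \<tau> h) (bs h)"
    by metis
  define s where "s = (\<lambda>h. return_pmf (bs h))"
  have s: "is_strategy A i s" using bs(1) by (auto simp: s_def is_strategy_def)
  define \<sigma> where "\<sigma> = \<tau>(i := s)"
  have prof: "is_profile A \<sigma>" unfolding \<sigma>_def by (rule profile_upd[OF tau s])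
  have yeq: "yv \<sigma> h j b = yv \<tau> h j b" if "j \<noteq> i" for h j b
    using that by (simp add: yv_def \<sigma>_def)
  have ab: "absorb \<sigma> h = Pw (yv \<tau> h) (bs h)" for h
  proof -
    have "absorb \<sigma> h = (\<Sum>b\<in>A i. pmf (return_pmf (bs h)) b * Pw (yv \<tau> h) b)"
      unfolding absorb_split using Pw_cong[of "yv \<sigma> h" "yv \<tau> h"] yeq
      by (simp add: \<sigma>_def s_def del: pmf_return)
    also have "\<dots> = Pw (yv \<tau> h) (bs h)" by (rule sum_return[OF bs(1)])
    finally show ?thesis .
  qed
  have inn: "inner \<sigma> h = Rw (yv \<tau> h) (bs h)" for h
  proof -
    have "inner \<sigma> h = (\<Sum>b\<in>A i. pmf (return_pmf (bs h)) b * Rw (yv \<tau> h) b)"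
      unfolding inner_split using Rw_cong[of "yv \<sigma> h" "yv \<tau> h"] yeq
      by (simp add: \<sigma>_def s_def del: pmf_return)
    also have "\<dots> = Rw (yv \<tau> h) (bs h)" by (rule sum_return[OF bs(1)])
    finally show ?thesis .
  qed
  have "cval - \<epsilon> \<le> payoff A r p \<sigma> i"
  proof (rule payoff_lower[OF prof, of _ "min \<delta> 1"])
    show "(cval - \<epsilon>) * absorb \<sigma> h \<le> inner \<sigma> h" for h using bs(3) by (simp add: ab inn)
    show "min \<delta> 1 \<le> absorb \<sigma> h" for h using bs(2)[of h] by (simp add: ab)
  qed (use e d in auto)
  then show ?thesis using s by (auto simp: \<sigma>_def)
qed

lemma cval_le_minmax: "cval \<le> minmax A r p i"
  unfolding minmax_def
proof (rule cINF_greatest)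
  show "{\<tau>. is_profile A \<tau>} \<noteq> {}" using profile_exists by blast
next
  fix \<tau> assume "\<tau> \<in> {\<tau>. is_profile A \<tau>}"
  then have tau: "is_profile A \<tau>" by simp
  let ?f = "\<lambda>s. payoff A r p (\<tau>(i := s)) i"
  let ?S = "{s. is_strategy A i s}"
  have bdd: "bdd_above (?f ` ?S)"
    using payoff_le1[OF profile_upd[OF tau]] by (intro bdd_aboveI[of _ 1]) auto
  have s0: "\<tau> i \<in> ?S" using tau by (simp add: is_profile_def)
  have "is_strategy A i (\<tau> i)" using s0 by simp
  from payoff_nonneg[OF profile_upd[OF tau this]] have "0 \<le> ?f (\<tau> i)" .
  also have "\<dots> \<le> Sup (?f ` ?S)" by (rule cSUP_upper[OF s0 bdd])
  finally have sup0: "0 \<le> Sup (?f ` ?S)" .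
  show "cval \<le> Sup (?f ` ?S)"
  proof (rule field_le_epsilon)
    fix \<epsilon> :: real assume e: "0 < \<epsilon>"
    show "cval \<le> Sup (?f ` ?S) + \<epsilon>"
    proof (cases "\<epsilon> \<le> cval")
      case True
      then obtain s where s: "is_strategy A i s" "cval - \<epsilon> \<le> ?f s"
        using key_lower[OF tau e] by blast
      have "?f s \<le> Sup (?f ` ?S)" using s(1) by (intro cSUP_upper[OF _ bdd]) simp
      then show ?thesis using s(2) by simp
    next
      case False
      then show ?thesis using sup0 by simp
    qed
  qed
qed

end

context game begin

lemma upper_main:
  assumes vy: "valid y" and gy: "good y cval"
    and prof: "is_profile A \<sigma>"
    and agree: "\<And>h j b. j \<noteq> i \<Longrightarrow> b \<in> A j \<Longrightarrow> pmf (\<sigma> j h) b = y j b"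
  shows "payoff A r p \<sigma> i \<le> cval"
proof (rule payoff_upper[OF prof _ cval_nonneg])
  fix h
  have yeq: "\<And>j b. j \<noteq> i \<Longrightarrow> b \<in> A j \<Longrightarrow> yv \<sigma> h j b = y j b"
    using agree by (simp add: yv_def)
  have "inner \<sigma> h = (\<Sum>b\<in>A i. pmf (\<sigma> i h) b * Rw y b)"
    unfolding inner_split using Rw_cong[OF yeq] by simp
  also have "\<dots> \<le> (\<Sum>b\<in>A i. pmf (\<sigma> i h) b * (cval * Pw y b))"
    using gy by (intro sum_mono mult_left_mono) (auto simp: good_def)
  also have "\<dots> = cval * (\<Sum>b\<in>A i. pmf (\<sigma> i h) b * Pw y b)"
    by (simp add: sum_distrib_left mult_ac)
  also have "(\<Sum>b\<in>A i. pmf (\<sigma> i h) b * Pw y b) = absorb \<sigma> h"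
    unfolding absorb_split using Pw_cong[OF yeq] by simp
  finally show "inner \<sigma> h \<le> cval * absorb \<sigma> h" .
qed

end

theorem mainTheorem3:
  fixes A :: "'i::finite \<Rightarrow> 'a set"
    and r :: "'i \<Rightarrow> ('i \<Rightarrow> 'a) \<Rightarrow> real"
    and p :: "('i \<Rightarrow> 'a) \<Rightarrow> real"
    and i :: 'i
  assumes "pos_rec_absorbing_game A r p"
  shows "\<exists>x :: 'i \<Rightarrow> 'a pmf. (\<forall>j. set_pmf (x j) \<subseteq> A j) \<and>
           (\<forall>s. is_strategy A i s \<longrightarrow>
              payoff A r p ((\<lambda>j h. x j)(i := s)) i \<le> minmax A r p i)"
proof -
  interpret g: game A r p i using assms by (simp add: game_def)
  obtain y where vy: "g.valid y" and gy: "g.good y g.cval" using g.exists_min by blast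
  define x where "x = (\<lambda>j. embed_pmf (\<lambda>b. if b \<in> A j then y j b else 0))"
  have px: "pmf (x j) b = (if b \<in> A j then y j b else 0)" for j b
    unfolding x_def
  proof (rule pmf_embed_pmf)
    show "0 \<le> (if b \<in> A j then y j b else 0)" for b using vy by (auto simp: g.valid_def)
    have "(\<integral>\<^sup>+ b. ennreal (if b \<in> A j then y j b else 0) \<partial>count_space UNIV)
        = (\<Sum>b\<in>A j. ennreal (if b \<in> A j then y j b else 0))"
      by (rule nn_integral_count_space') (auto simp: g.finA)
    also have "\<dots> = (\<Sum>b\<in>A j. ennreal (y j b))" by simp
    also have "\<dots> = ennreal (sum (y j) (A j))"
      using vy by (intro sum_ennreal) (auto simp: g.valid_def)
    also have "\<dots> = 1" using vy by (simp add: g.valid_def)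
    finally show "(\<integral>\<^sup>+ b. ennreal (if b \<in> A j then y j b else 0) \<partial>count_space UNIV) = 1" .
  qed
  have sx: "set_pmf (x j) \<subseteq> A j" for j
    by (auto simp: set_pmf_eq px split: if_splits)
  show ?thesis
  proof (intro exI[of _ x] conjI allI impI)
    show "set_pmf (x j) \<subseteq> A j" for j by (rule sx)
    fix s assume s: "is_strategy A i s"
    have prof: "is_profile A ((\<lambda>j h. x j)(i := s))"
      using s sx by (auto simp: is_profile_def is_strategy_def)
    have "payoff A r p ((\<lambda>j h. x j)(i := s)) i \<le> g.cval"
      by (rule g.upper_main[OF vy gy prof]) (simp add: px)
    also have "\<dots> \<le> minmax A r p i" by (rule g.cval_le_minmax)
    finally show "payoff A r p ((\<lambda>j h. x j)(i := s)) i \<le> minmax A r p i" .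
  qed
qed

end
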